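(* Let $X\subset\mathbb{P}^{n+1}$ be a smooth cubic hypersurface over $\mathbb{Q}$ with $n\ge3$. Let $P\in X(\mathbb{Q})$ be a non-Eckardt point and let $Q\in X_P(\mathbb{Q})$ with $T_Q X\ne T_P X$. Then $Q\in\operatorname{Span}(P)$.
   Context: $T_P X$ is the tangent hyperplane to $X$ at $P$ and $X_P:=X\cap T_P X$. A point $P\in X$ is an Eckardt point if $X_P$ is a cone with vertex $P$. For $S\subseteq X(\mathbb{Q})$, define $S=S_0\subseteq S_1\subseteq\cdots$ by letting $S_{k+1}$ be the set of $R\in X(\mathbb{Q})$ with either $R\in S_k$ or $\ell\cdot X=P+Q+R$ for some $\mathbb{Q}$-line $\ell\not\subset X$ and some $P,Q\in S_k$ (possibly equal); $\operatorname{Span}(S)=\bigcup_kS_k$ and $\operatorname{Span}(P)=\operatorname{Span}(\{P\})$. *)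

theory Defs
  imports Complex_Main "HOL-Library.Cardinality"
begin

text \<open>A cubic form in the homogeneous coordinates of P^{n+1} is given by rational
coefficients c i j k, indexed by a finite type 'n with CARD('n) = n + 2.
Points of P^{n+1} are represented by nonzero coordinate vectors; everything below
is invariant under nonzero rescaling of representatives.\<close>

type_synonym 'n cubic = "'n \<Rightarrow> 'n \<Rightarrow> 'n \<Rightarrow> rat"

definition cform :: "('n::finite) cubic \<Rightarrow> ('n \<Rightarrow> 'a::field_char_0) \<Rightarrow> 'a" where
  "cform c x = (\<Sum>i\<in>UNIV. \<Sum>j\<in>UNIV. \<Sum>k\<in>UNIV. of_rat (c i j k) * x i * x j * x k)"

definition cpartial :: "('n::finite) cubic \<Rightarrow> 'n \<Rightarrow> ('n \<Rightarrow> 'a::field_char_0) \<Rightarrow> 'a" where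
  "cpartial c m x = (\<Sum>i\<in>UNIV. \<Sum>j\<in>UNIV. \<Sum>k\<in>UNIV. of_rat (c i j k) *
      ((if i = m then x j * x k else 0) + (if j = m then x i * x k else 0)
       + (if k = m then x i * x j else 0)))"

text \<open>Smoothness: the partial derivatives have no common zero in P^{n+1} over
an algebraically closed field of characteristic 0 (we use the complex numbers).\<close>
definition smooth_cubic :: "('n::finite) cubic \<Rightarrow> bool" where
  "smooth_cubic c \<longleftrightarrow> (\<forall>z :: 'n \<Rightarrow> complex. (\<forall>m. cpartial c m z = 0) \<longrightarrow> z = (\<lambda>_. 0))"

definition to_cplx :: "('n \<Rightarrow> rat) \<Rightarrow> ('n \<Rightarrow> complex)" where
  "to_cplx x = (\<lambda>i. of_rat (x i))"

definition on_X :: "('n::finite) cubic \<Rightarrow> ('n \<Rightarrow> rat) \<Rightarrow> bool" where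
  "on_X c x \<longleftrightarrow> x \<noteq> (\<lambda>_. 0) \<and> cform c x = 0"

definition in_tangent :: "('n::finite) cubic \<Rightarrow> ('n \<Rightarrow> 'a::field_char_0) \<Rightarrow> ('n \<Rightarrow> 'a) \<Rightarrow> bool" where
  "in_tangent c P x \<longleftrightarrow> (\<Sum>m\<in>UNIV. cpartial c m P * x m) = 0"

definition tangent_hyperplane :: "('n::finite) cubic \<Rightarrow> ('n \<Rightarrow> rat) \<Rightarrow> ('n \<Rightarrow> rat) set" where
  "tangent_hyperplane c P = {x. in_tangent c P x}"

text \<open>P is an Eckardt point: X_P = X \<inter> T_P X is a cone with vertex P, i.e. for every
(geometric, complex) point R of X_P the whole line through P and R lies in X_P.\<close>
definition eckardt :: "('n::finite) cubic \<Rightarrow> ('n \<Rightarrow> rat) \<Rightarrow> bool" where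
  "eckardt c P \<longleftrightarrow>
     (\<forall>R :: 'n \<Rightarrow> complex. cform c R = 0 \<and> in_tangent c (to_cplx P) R \<longrightarrow>
        (\<forall>s t :: complex. cform c (\<lambda>i. s * to_cplx P i + t * R i) = 0 \<and>
                          in_tangent c (to_cplx P) (\<lambda>i. s * to_cplx P i + t * R i)))"

text \<open>line_meets c P Q R: there is a Q-line l (spanned by independent rational
vectors A, B) not contained in X with l \<cdot> X = P + Q + R as divisors: the restriction
of the cubic form to l is a nonzero multiple of the product of the linear forms
vanishing at the parameters of P, Q, R.\<close>
definition line_meets :: "('n::finite) cubic \<Rightarrow> ('n \<Rightarrow> rat) \<Rightarrow> ('n \<Rightarrow> rat) \<Rightarrow> ('n \<Rightarrow> rat) \<Rightarrow> bool" where
  "line_meets c P Q R \<longleftrightarrow>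
    (\<exists>A B :: 'n \<Rightarrow> rat.
       (\<forall>s t. (\<forall>i. s * A i + t * B i = 0) \<longrightarrow> s = 0 \<and> t = 0) \<and>
       (\<exists>p1 p2 q1 q2 r1 r2 a b e k :: rat.
          (p1, p2) \<noteq> (0, 0) \<and> (q1, q2) \<noteq> (0, 0) \<and> (r1, r2) \<noteq> (0, 0) \<and>
          a \<noteq> 0 \<and> b \<noteq> 0 \<and> e \<noteq> 0 \<and> k \<noteq> 0 \<and>
          P = (\<lambda>i. a * (p1 * A i + p2 * B i)) \<and>
          Q = (\<lambda>i. b * (q1 * A i + q2 * B i)) \<and>
          R = (\<lambda>i. e * (r1 * A i + r2 * B i)) \<and>
          (\<forall>s t. cform c (\<lambda>i. s * A i + t * B i)
                   = k * (p2 * s - p1 * t) * (q2 * s - q1 * t) * (r2 * s - r1 * t))))"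

text \<open>Span(P0) = union of the S_k, as an inductive closure; points are
represented by all their nonzero rational representatives.\<close>
inductive_set qspan :: "('n::finite) cubic \<Rightarrow> ('n \<Rightarrow> rat) \<Rightarrow> ('n \<Rightarrow> rat) set"
  for c :: "'n cubic" and P0 :: "'n \<Rightarrow> rat" where
  base: "a \<noteq> 0 \<Longrightarrow> (\<lambda>i. a * P0 i) \<in> qspan c P0"
| step: "P \<in> qspan c P0 \<Longrightarrow> Q \<in> qspan c P0 \<Longrightarrow> line_meets c P Q R \<Longrightarrow> R \<in> qspan c P0"

end

theory Submission
  imports Defs "HOL-Computational_Algebra.Fundamental_Theorem_Algebra"
begin


definition T3 :: "('n::finite) cubic \<Rightarrow> ('n \<Rightarrow> 'a::field_char_0) \<Rightarrow> ('n \<Rightarrow> 'a) \<Rightarrow> ('n \<Rightarrow> 'a) \<Rightarrow> 'a" where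
 "T3 c x y z = (\<Sum>i\<in>UNIV. \<Sum>j\<in>UNIV. \<Sum>k\<in>UNIV. of_rat (c i j k) *
    (x i*y j*z k + x i*z j*y k + y i*x j*z k + y i*z j*x k + z i*x j*y k + z i*y j*x k)) / 6"

definition lc :: "'a::comm_ring_1 \<Rightarrow> ('n \<Rightarrow> 'a) \<Rightarrow> 'a \<Rightarrow> ('n \<Rightarrow> 'a) \<Rightarrow> ('n \<Rightarrow> 'a)" where
 "lc s x t y = (\<lambda>i. s * x i + t * y i)"

lemma T3_sym12: "T3 c x y z = T3 c y x z"
  unfolding T3_def by (simp add: ac_simps)
lemma T3_sym23: "T3 c x y z = T3 c x z y"
  unfolding T3_def by (simp add: ac_simps)

lemma T3_lin1: "T3 c (lc s a t b) y z = s * T3 c a y z + t * T3 c b y z"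
  unfolding T3_def lc_def
  by (simp add: algebra_simps sum.distrib sum_distrib_left add_divide_distrib)

lemma sum_swap4: "(\<Sum>m\<in>M. \<Sum>i\<in>I. \<Sum>j\<in>J. \<Sum>k\<in>K. f i j k m) = (\<Sum>i\<in>I. \<Sum>j\<in>J. \<Sum>k\<in>K. \<Sum>m\<in>M. f i j k m)"
proof -
  have "(\<Sum>m\<in>M. \<Sum>i\<in>I. \<Sum>j\<in>J. \<Sum>k\<in>K. f i j k m) = (\<Sum>i\<in>I. \<Sum>m\<in>M. \<Sum>j\<in>J. \<Sum>k\<in>K. f i j k m)"
    by (rule sum.swap)
  also have "\<dots> = (\<Sum>i\<in>I. \<Sum>j\<in>J. \<Sum>m\<in>M. \<Sum>k\<in>K. f i j k m)"
    by (rule sum.cong[OF refl], rule sum.swap)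
  also have "\<dots> = (\<Sum>i\<in>I. \<Sum>j\<in>J. \<Sum>k\<in>K. \<Sum>m\<in>M. f i j k m)"
    by (rule sum.cong[OF refl], rule sum.cong[OF refl], rule sum.swap)
  finally show ?thesis .
qed

lemma cform_T3: "cform c x = T3 c x x x"
proof -
  have "\<And>i j k. of_rat (c i j k) * (x i*x j*x k + x i*x j*x k + x i*x j*x k + x i*x j*x k + x i*x j*x k + x i*x j*x k)
     = 6 * (of_rat (c i j k) * x i * x j * x k)" by (simp add: algebra_simps)
  then show ?thesis unfolding T3_def cform_def
    by (simp only: sum_distrib_left[symmetric]) simp
qed

lemma grad_T3: "(\<Sum>m\<in>UNIV. cpartial c m x * y m) = 3 * T3 c y x x"
proof -
  have "(\<Sum>m\<in>UNIV. cpartial c m x * y m) = (\<Sum>m\<in>UNIV. \<Sum>i\<in>UNIV. \<Sum>j\<in>UNIV. \<Sum>k\<in>UNIV. of_rat (c i j k) *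
      ((if i = m then x j * x k else 0) + (if j = m then x i * x k else 0)
       + (if k = m then x i * x j else 0)) * y m)"
    unfolding cpartial_def sum_distrib_right ..
  also have "\<dots> = (\<Sum>i\<in>UNIV. \<Sum>j\<in>UNIV. \<Sum>k\<in>UNIV. \<Sum>m\<in>UNIV. of_rat (c i j k) *
      ((if i = m then x j * x k else 0) + (if j = m then x i * x k else 0)
       + (if k = m then x i * x j else 0)) * y m)" by (rule sum_swap4)
  also have "\<dots> = (\<Sum>i\<in>UNIV. \<Sum>j\<in>UNIV. \<Sum>k\<in>UNIV. of_rat (c i j k) * (y i * x j * x k + x i * y j * x k + x i * x j * y k))"
  proof -
    have e: "\<And>a u v w i j k m. a * ((if i = m then u else 0) + (if j = m then v else 0) + (if k = m then w else 0)) * y m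
       = (if i = m then a*u*y i else 0) + (if j = m then a*v*y j else 0) + (if k = m then a*w*y k else 0)"
      by (simp add: algebra_simps)
    show ?thesis unfolding e by (simp add: sum.distrib algebra_simps)
  qed
  also have "\<dots> = 3 * T3 c y x x"
  proof -
    have "\<And>i j k. of_rat (c i j k) * (y i*x j*x k + y i*x j*x k + x i*y j*x k + x i*x j*y k + x i*y j*x k + x i*x j*y k)
     = 2 * (of_rat (c i j k) * (y i * x j * x k + x i * y j * x k + x i * x j * y k))" by (simp add: algebra_simps)
    then show ?thesis unfolding T3_def by (simp only: sum_distrib_left[symmetric]) simp
  qed
  finally show ?thesis .
qed



definition ispoly :: "('a::comm_ring_1 \<Rightarrow> 'a) \<Rightarrow> bool" where
  "ispoly f \<longleftrightarrow> (\<exists>p. \<forall>t. f t = poly p t)"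

lemma ispoly_const[intro]: "ispoly (\<lambda>t. a)"
  unfolding ispoly_def by (rule exI[of _ "[:a:]"]) simp
lemma ispoly_id[intro]: "ispoly (\<lambda>t. t)"
  unfolding ispoly_def by (rule exI[of _ "[:0,1:]"]) simp
lemma ispoly_add[intro]: "ispoly f \<Longrightarrow> ispoly g \<Longrightarrow> ispoly (\<lambda>t. f t + g t)"
  unfolding ispoly_def by (metis poly_add)
lemma ispoly_mult[intro]: "ispoly f \<Longrightarrow> ispoly g \<Longrightarrow> ispoly (\<lambda>t. f t * g t)"
  unfolding ispoly_def by (metis poly_mult)
lemma ispoly_uminus[intro]: "ispoly f \<Longrightarrow> ispoly (\<lambda>t. - f t)"
  unfolding ispoly_def by (metis poly_minus)
lemma ispoly_diff[intro]: "ispoly f \<Longrightarrow> ispoly g \<Longrightarrow> ispoly (\<lambda>t. f t - g t)"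
  using ispoly_add[of f "\<lambda>t. - g t"] ispoly_uminus[of g] by simp
lemma ispoly_sum[intro]: "(\<And>i. i \<in> A \<Longrightarrow> ispoly (f i)) \<Longrightarrow> ispoly (\<lambda>t. \<Sum>i\<in>A. f i t)"
proof (induction A rule: infinite_finite_induct)
  case (infinite A) then show ?case by auto
next
  case empty then show ?case by auto
next
  case (insert x F) then show ?case by (auto intro!: ispoly_add)
qed

definition slp :: "(('n \<Rightarrow> 'a::comm_ring_1) \<Rightarrow> 'a) \<Rightarrow> bool" where
  "slp h \<longleftrightarrow> (\<forall>u v. ispoly (\<lambda>t. h (\<lambda>i. u i + t * v i)))"
definition vlp :: "(('n \<Rightarrow> 'a::comm_ring_1) \<Rightarrow> ('m \<Rightarrow> 'a)) \<Rightarrow> bool" where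
  "vlp f \<longleftrightarrow> (\<forall>j. slp (\<lambda>x. f x j))"

lemma slp_const[intro]: "slp (\<lambda>x. a)" unfolding slp_def by auto
lemma slp_coord[intro]: "slp (\<lambda>x. x j)" unfolding slp_def by (intro allI ispoly_add ispoly_mult) auto
lemma slp_add[intro]: "slp f \<Longrightarrow> slp g \<Longrightarrow> slp (\<lambda>x. f x + g x)" unfolding slp_def by auto
lemma slp_diff[intro]: "slp f \<Longrightarrow> slp g \<Longrightarrow> slp (\<lambda>x. f x - g x)" unfolding slp_def by auto
lemma slp_mult[intro]: "slp f \<Longrightarrow> slp g \<Longrightarrow> slp (\<lambda>x. f x * g x)" unfolding slp_def by auto
lemma slp_sum[intro]: "(\<And>i. i \<in> A \<Longrightarrow> slp (f i)) \<Longrightarrow> slp (\<lambda>x. \<Sum>i\<in>A. f i x)"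
  unfolding slp_def by (auto intro!: ispoly_sum)
lemma slp_vlp[intro]: "vlp f \<Longrightarrow> slp (\<lambda>x. f x j)" unfolding vlp_def by auto
lemma vlpI[intro]: "(\<And>j. slp (\<lambda>x. f x j)) \<Longrightarrow> vlp f" unfolding vlp_def by auto
lemma vlp_id[intro]: "vlp (\<lambda>x. x)" by auto
lemma vlp_const[intro]: "vlp (\<lambda>x. a)" by auto

lemma slp_T3[intro]: "vlp f \<Longrightarrow> vlp g \<Longrightarrow> vlp h \<Longrightarrow> slp (\<lambda>x. T3 c (f x) (g x) (h x))"
  unfolding T3_def divide_inverse
  by (intro slp_mult slp_sum slp_add slp_const slp_vlp)

lemma slp_cform[intro]: "vlp f \<Longrightarrow> slp (\<lambda>x. cform c (f x))"
  unfolding cform_T3 by auto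

lemma slp_prod:
  fixes f g :: "('n \<Rightarrow> 'a::field_char_0) \<Rightarrow> 'a"
  assumes "slp f" "slp g" "f u \<noteq> 0" "g w \<noteq> 0"
  shows "\<exists>t. f (lc (1 - t) u t w) \<noteq> 0 \<and> g (lc (1 - t) u t w) \<noteq> 0"
proof -
  have e: "\<And>t. lc (1 - t) u t w = (\<lambda>i. u i + t * (w i - u i))"
    unfolding lc_def by (auto simp: algebra_simps)
  obtain p where p: "\<And>t. f (\<lambda>i. u i + t * (w i - u i)) = poly p t"
    using assms(1)[unfolded slp_def, rule_format, of u "\<lambda>i. w i - u i"] unfolding ispoly_def by blast
  obtain q where q: "\<And>t. g (\<lambda>i. u i + t * (w i - u i)) = poly q t"
    using assms(2)[unfolded slp_def, rule_format, of u "\<lambda>i. w i - u i"] unfolding ispoly_def by blast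
  have "poly p 0 \<noteq> 0" using p[of 0] assms(3) by simp
  then have p0: "p \<noteq> 0" by auto
  have "poly q 1 \<noteq> 0" using q[of 1] assms(4) by simp
  then have q0: "q \<noteq> 0" by auto
  have "p * q \<noteq> 0" using p0 q0 by simp
  then have "finite {x. poly (p * q) x = 0}" by (rule poly_roots_finite)
  then obtain t where "poly (p * q) t \<noteq> 0"
    using infinite_UNIV_char_0[where 'a='a] by (metis (mono_tags, lifting) UNIV_I finite_subset mem_Collect_eq subsetI)
  then show ?thesis unfolding e p q by auto
qed

definition emb :: "('n \<Rightarrow> rat) \<Rightarrow> ('n \<Rightarrow> 'a::field_char_0)" where
  "emb x = (\<lambda>i. of_rat (x i))"

lemma emb_rat[simp]: "(emb x :: 'n \<Rightarrow> rat) = x" unfolding emb_def by simp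

lemma T3_emb: "T3 c (emb x) (emb y) (emb z) = (of_rat (T3 c x y z) :: 'a::field_char_0)"
  unfolding T3_def emb_def by (simp add: of_rat_sum of_rat_mult of_rat_add of_rat_divide)

lemma cform_emb: "cform c (emb x) = (of_rat (cform c x) :: 'a::field_char_0)"
  unfolding cform_T3 T3_emb ..

lemma cpartial_emb: "cpartial c m (emb x) = (of_rat (cpartial c m x) :: 'a::field_char_0)"
proof -
  have oi: "\<And>b (x::rat). (of_rat (if b then x else 0) :: 'a) = (if b then of_rat x else 0)" by simp
  show ?thesis unfolding cpartial_def emb_def by (simp only: of_rat_sum of_rat_mult of_rat_add oi of_rat_eq_id id_apply)
qed

lemma transfer_zero:
  fixes h :: "('n::finite \<Rightarrow> complex) \<Rightarrow> complex"
  assumes "slp h" "\<And>x. h (emb x) = 0"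
  shows "h z = 0"
proof -
  have "\<forall>z. (\<forall>i. i \<notin> S \<longrightarrow> z i \<in> \<rat>) \<longrightarrow> h z = 0" for S :: "'n set"
  proof (induction S rule: infinite_finite_induct)
    case (infinite A) then show ?case by simp
  next
    case empty
    show ?case
    proof (intro allI impI)
      fix z :: "'n \<Rightarrow> complex" assume "\<forall>i. i \<notin> {} \<longrightarrow> z i \<in> \<rat>"
      then have "\<forall>i. \<exists>r. z i = of_rat r" by (auto elim: Rats_cases)
      then obtain x where "\<And>i. z i = of_rat (x i)" by metis
      then have "z = emb x" unfolding emb_def by auto
      then show "h z = 0" using assms(2) by simp
    qed
  next
    case (insert a S)
    show ?case
    proof (intro allI impI)
      fix z :: "'n \<Rightarrow> complex" assume z: "\<forall>i. i \<notin> insert a S \<longrightarrow> z i \<in> \<rat>"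
      define z0 where "z0 = z(a := 0)"
      define ea where "ea = (\<lambda>i. if i = a then (1::complex) else 0)"
      have ez: "(\<lambda>i. z0 i + t * ea i) = z(a := t)" for t
        unfolding z0_def ea_def by auto
      obtain p where p: "\<And>t. h (\<lambda>i. z0 i + t * ea i) = poly p t"
        using assms(1) unfolding slp_def ispoly_def by blast
      have "poly p t = 0" if "t \<in> \<rat>" for t
      proof -
        have "\<forall>i. i \<notin> S \<longrightarrow> (z(a := t)) i \<in> \<rat>" using z that by auto
        then have "h (z(a:=t)) = 0" using insert.IH by blast
        then show ?thesis using p[of t] ez[of t] by simp
      qed
      then have "\<rat> \<subseteq> {x. poly p x = 0}" by auto
      then have "p = 0" using poly_roots_finite Rats_infinite finite_subset by blast
      then have "h (z(a := z a)) = 0" using p[of "z a"] ez[of "z a"] by simp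
      then show "h z = 0" by simp
    qed
  qed
  then show ?thesis by blast
qed



definition ev :: "'n \<Rightarrow> 'n \<Rightarrow> 'a::comm_ring_1" where "ev m = (\<lambda>i. if i = m then 1 else 0)"
definition dotp :: "('n::finite \<Rightarrow> 'a::comm_ring_1) \<Rightarrow> ('n \<Rightarrow> 'a) \<Rightarrow> 'a" where
  "dotp l x = (\<Sum>i\<in>UNIV. l i * x i)"

lemma T3_lin2: "T3 c y (lc s a t b) z = s * T3 c y a z + t * T3 c y b z"
  using T3_lin1[of c s a t b y z] T3_sym12[of c y] T3_sym12[of c _ y z] by metis
lemma T3_lin3: "T3 c y z (lc s a t b) = s * T3 c y z a + t * T3 c y z b"
  using T3_lin2[of c y s a t b z] T3_sym23[of c y] T3_sym23[of c y _ z] by metis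
lemmas T3_lin = T3_lin1 T3_lin2 T3_lin3
lemmas T3_sym = T3_sym12 T3_sym23

lemma T3_zero3[simp]: "T3 c x y (\<lambda>_. 0) = 0" unfolding T3_def by simp
lemma T3_zero1[simp]: "T3 c (\<lambda>_. 0) x y = 0" unfolding T3_def by simp
lemma T3_zero2[simp]: "T3 c x (\<lambda>_. 0) y = 0" unfolding T3_def by simp

lemma dotp_ev: "dotp l (ev m) = l m" unfolding dotp_def ev_def
  by (subst sum.cong[OF refl, of _ _ "\<lambda>i. if i = m then l i else 0"]) auto
lemma dotp_ev': "dotp (ev m) l = l m" unfolding dotp_def ev_def
  by (subst sum.cong[OF refl, of _ _ "\<lambda>i. if i = m then l i else 0"]) auto

lemma dotp_lc: "dotp l (lc s x t y) = s * dotp l x + t * dotp l y"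
  unfolding dotp_def lc_def by (simp add: algebra_simps sum.distrib sum_distrib_left)

lemma grad_dotp: "dotp (\<lambda>m. cpartial c m x) y = 3 * T3 c y x x"
  unfolding dotp_def by (rule grad_T3)

lemma cpartial_ev: "cpartial c m x = 3 * T3 c (ev m) x x"
  using grad_dotp[of c x "ev m"] by (simp add: dotp_ev)

lemma in_tangent_iff: "in_tangent c P x \<longleftrightarrow> T3 c x P P = 0"
  unfolding in_tangent_def using grad_T3[of c P x] by simp

lemma T3_dotp: "T3 c a b x = dotp (\<lambda>m. T3 c a b (ev m)) x"
proof -
  have "dotp (\<lambda>m. T3 c a b (ev m)) x = (\<Sum>m\<in>UNIV. T3 c a b (ev m) * x m)" unfolding dotp_def ..
  also have "\<dots> = (\<Sum>m\<in>UNIV. (\<Sum>i\<in>UNIV. \<Sum>j\<in>UNIV. \<Sum>k\<in>UNIV. of_rat (c i j k) *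
    (a i*b j*ev m k + a i*ev m j*b k + b i*a j*ev m k + b i*ev m j*a k + ev m i*a j*b k + ev m i*b j*a k) * x m) / 6)"
    unfolding T3_def by (simp only: times_divide_eq_left sum_distrib_right)
  also have "\<dots> = (\<Sum>i\<in>UNIV. \<Sum>j\<in>UNIV. \<Sum>k\<in>UNIV. \<Sum>m\<in>UNIV. of_rat (c i j k) *
    (a i*b j*ev m k + a i*ev m j*b k + b i*a j*ev m k + b i*ev m j*a k + ev m i*a j*b k + ev m i*b j*a k) * x m) / 6"
    unfolding sum_divide_distrib[symmetric] by (rule arg_cong[where f="\<lambda>x. x/6"], rule sum_swap4)
  also have "\<dots> = T3 c a b x"
  proof -
    have e: "\<And>i j k. (\<Sum>m\<in>UNIV. of_rat (c i j k) *
    (a i*b j*ev m k + a i*ev m j*b k + b i*a j*ev m k + b i*ev m j*a k + ev m i*a j*b k + ev m i*b j*a k) * x m)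
      = of_rat (c i j k) * (a i*b j*x k + a i*x j*b k + b i*a j*x k + b i*x j*a k + x i*a j*b k + x i*b j*a k)"
    proof -
      have r1: "\<And>(a::'a) P. a * (if P then 1 else 0) = (if P then a else 0)" by simp
      have r3: "\<And>(a::'a) b P. (if P then a else 0) * b = (if P then a*b else 0)" by simp
      have r4: "\<And>(a::'a) b P. b * (if P then a else 0) = (if P then b*a else 0)" by simp
      show "\<And>i j k. ?thesis i j k"
        apply (simp only: distrib_left distrib_right sum.distrib ev_def r1 r3 r4)
        by simp
    qed
    show ?thesis unfolding e T3_def ..
  qed
  finally show ?thesis ..
qed

lemma cform_lc: "cform c (lc s x t y) = s^3 * T3 c x x x + 3 * s^2 * t * T3 c x x y + 3 * s * t^2 * T3 c x y y + t^3 * T3 c y y y"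
  unfolding cform_T3 T3_lin
  apply (simp only: T3_sym)
  by (simp add: algebra_simps power2_eq_square power3_eq_cube)



definition bil :: "(('n \<Rightarrow> 'a::comm_ring_1) \<Rightarrow> ('n \<Rightarrow> 'a) \<Rightarrow> 'a) \<Rightarrow> bool" where
 "bil B \<longleftrightarrow> (\<forall>s x t y z. B (lc s x t y) z = s * B x z + t * B y z \<and> B z (lc s x t y) = s * B z x + t * B z y)"

definition supp :: "'n set \<Rightarrow> ('n \<Rightarrow> 'a::zero) \<Rightarrow> bool" where
  "supp S x \<longleftrightarrow> (\<forall>i. i \<notin> S \<longrightarrow> x i = 0)"

lemma bq_lc: "bil B \<Longrightarrow> B (lc a x b y) (lc a x b y) = a^2 * B x x + a*b*(B x y + B y x) + b^2 * B y y"
  unfolding bil_def by (simp add: algebra_simps power2_eq_square)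

lemma bil_l: "bil B \<Longrightarrow> B (lc s x t y) z = s * B x z + t * B y z" unfolding bil_def by blast
lemma bil_r: "bil B \<Longrightarrow> B z (lc s x t y) = s * B z x + t * B z y" unfolding bil_def by blast

lemma binary_zero:
  fixes B :: "('n \<Rightarrow> complex) \<Rightarrow> ('n \<Rightarrow> complex) \<Rightarrow> complex"
  assumes "bil B"
  shows "\<exists>a b. (a \<noteq> 0 \<or> b \<noteq> 0) \<and> B (lc a u b v) (lc a u b v) = 0"
proof (cases "B u u = 0")
  case True then show ?thesis by (intro exI[of _ 1] exI[of _ 0]) (simp add: bq_lc[OF assms])
next
  case False
  define s where "s = B u v + B v u"
  define D where "D = csqrt (s^2 - 4 * B u u * B v v)"
  define a where "a = (-s + D) / (2 * B u u)"
  have D2: "D^2 = s^2 - 4 * B u u * B v v" unfolding D_def by simp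
  have aD: "2 * B u u * a + s = D" unfolding a_def using False by (simp add: field_simps)
  have "4 * B u u * (B u u * a^2 + s * a + B v v) = (2 * B u u * a + s)^2 - (s^2 - 4 * B u u * B v v)"
    by (simp add: algebra_simps power2_eq_square)
  also have "\<dots> = 0" unfolding aD D2 by simp
  finally have "B u u * a^2 + s * a + B v v = 0" using False by simp
  then show ?thesis by (intro exI[of _ a] exI[of _ 1]) (simp add: bq_lc[OF assms] s_def algebra_simps power2_eq_square)
qed

lemma lc_scale: "lc (m * a) x (m * b) y = lc m (lc a x b y) 0 (lc a x b y)"
  unfolding lc_def by (auto simp: algebra_simps)

lemma ternary_core:
  fixes B1 B2 :: "('n \<Rightarrow> complex) \<Rightarrow> ('n \<Rightarrow> complex) \<Rightarrow> complex"
  assumes b1: "bil B1" and b2: "bil B2" and ij: "i \<noteq> j" "i \<noteq> l" "j \<noteq> l"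
    and p: "p = lc \<alpha> (ev i) \<beta> (ev j)" and bet: "\<beta> \<noteq> 0" and pp: "B1 p p = 0"
  shows "\<exists>x. x \<noteq> (\<lambda>_. 0) \<and> supp {i,j,l} x \<and> B1 x x = 0 \<and> B2 x x = 0"
proof -
  define w1 :: "'n \<Rightarrow> complex" where "w1 = ev l"
  define w2 :: "'n \<Rightarrow> complex" where "w2 = ev i"
  define X where "X w = lc (-(B1 w w)) p (B1 p w + B1 w p) w" for w
  define f where "f a b = B2 (X (lc a w1 b w2)) (X (lc a w1 b w2))" for a b
  have Xs: "X (lc m w 0 w) = lc (m^2) (X w) 0 (X w)" for m w
  proof -
    have e1: "B1 p (lc m w 0 w) = m * B1 p w" by (simp add: bil_r[OF b1])
    have e2: "B1 (lc m w 0 w) p = m * B1 w p" by (simp add: bil_l[OF b1])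
    have e3: "B1 (lc m w 0 w) (lc m w 0 w) = m^2 * B1 w w" by (simp add: bq_lc[OF b1])
    show ?thesis unfolding X_def e1 e2 e3 by (simp add: lc_def fun_eq_iff algebra_simps power2_eq_square)
  qed
  have hom: "f (m*a) (m*b) = m^4 * f a b" for m a b
    unfolding f_def lc_scale Xs bq_lc[OF b2] by (simp add: power2_eq_square power4_eq_xxxx)
  have fexp: "f a b = (B1 (lc a w1 b w2) (lc a w1 b w2))^2 * B2 p p
     - B1 (lc a w1 b w2) (lc a w1 b w2) * (a * (B1 p w1 + B1 w1 p) + b * (B1 p w2 + B1 w2 p)) * (a * (B2 p w1 + B2 w1 p) + b * (B2 p w2 + B2 w2 p))
     + (a * (B1 p w1 + B1 w1 p) + b * (B1 p w2 + B1 w2 p))^2 * B2 (lc a w1 b w2) (lc a w1 b w2)" for a b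
    unfolding f_def X_def bq_lc[OF b2] bil_l[OF b1] bil_r[OF b1] bil_l[OF b2] bil_r[OF b2]
    by (simp add: algebra_simps power2_eq_square)
  have poly1: "ispoly (\<lambda>t. f 1 t)" unfolding fexp bq_lc[OF b1] bq_lc[OF b2] power2_eq_square
    by (intro ispoly_add ispoly_mult ispoly_diff ispoly_const ispoly_id)
  have poly2: "ispoly (\<lambda>t. f t 1)" unfolding fexp bq_lc[OF b1] bq_lc[OF b2] power2_eq_square
    by (intro ispoly_add ispoly_mult ispoly_diff ispoly_const ispoly_id)
  have root: "\<exists>a b. (a \<noteq> 0 \<or> b \<noteq> 0) \<and> f a b = 0"
  proof (rule ccontr)
    assume nr: "\<not> ?thesis"
    obtain p1 where p1: "\<And>t. f 1 t = poly p1 t" using poly1 unfolding ispoly_def by blast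
    obtain p2 where p2: "\<And>t. f t 1 = poly p2 t" using poly2 unfolding ispoly_def by blast
    have "constant (poly p1)"
    proof (rule ccontr)
      assume "\<not> constant (poly p1)"
      then obtain z where "poly p1 z = 0" using fundamental_theorem_of_algebra by blast
      then show False using nr p1[of z] by (metis one_neq_zero)
    qed
    then have c1: "f 1 t = f 1 0" for t unfolding p1 constant_def by metis
    have "constant (poly p2)"
    proof (rule ccontr)
      assume "\<not> constant (poly p2)"
      then obtain z where "poly p2 z = 0" using fundamental_theorem_of_algebra by blast
      then show False using nr p2[of z] by (metis one_neq_zero)
    qed
    then have c2: "f t 1 = f 0 1" for t unfolding p2 constant_def by metis
    have "f 2 1 = 16 * f 1 (1/2)" using hom[of 2 1 "1/2"] by simp
    then have "f 1 0 = 16 * f 1 0" using c1[of "1/2"] c1[of 1] c2[of 2] c2[of 1] by simp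
    then have "f 1 0 = 0" by simp
    then show False using nr by (metis one_neq_zero)
  qed
  then obtain a b where ab: "a \<noteq> 0 \<or> b \<noteq> 0" and fab: "f a b = 0" by blast
  define w where "w = lc a w1 b w2"
  define x where "x = X w"
  have pc: "p k = (if k = i then \<alpha> else if k = j then \<beta> else 0)" for k
    unfolding p lc_def ev_def using ij by auto
  have wc: "w k = (if k = l then a else if k = i then b else 0)" for k
    unfolding w_def lc_def w1_def w2_def ev_def using ij by auto
  have x1: "B1 x x = 0" unfolding x_def X_def bq_lc[OF b1] pp by (simp add: algebra_simps power2_eq_square)
  have x2: "B2 x x = 0" using fab unfolding f_def x_def w_def .
  have sx: "supp {i,j,l} x" unfolding supp_def x_def X_def lc_def using pc wc by auto
  show ?thesis
  proof (cases "x = (\<lambda>_. 0)")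
    case False then show ?thesis using x1 x2 sx by blast
  next
    case True
    have xc: "x k = - B1 w w * p k + (B1 p w + B1 w p) * w k" for k unfolding x_def X_def lc_def ..
    have "x j = 0" using True by simp
    then have ww: "B1 w w = 0" using xc[of j] pc[of j] wc[of j] ij bet by auto
    have "x l = 0" "x i = 0" using True by auto
    then have sg: "B1 p w + B1 w p = 0" using xc[of l] xc[of i] pc wc ij ab ww by auto
    obtain g d where gd: "g \<noteq> 0 \<or> d \<noteq> 0" and y2: "B2 (lc g p d w) (lc g p d w) = 0"
      using binary_zero[OF b2, of p w] by blast
    define y where "y = lc g p d w"
    have y1: "B1 y y = 0" unfolding y_def bq_lc[OF b1] pp ww sg by simp
    have yc: "y k = g * p k + d * w k" for k unfolding y_def lc_def ..
    have "y \<noteq> (\<lambda>_. 0)"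
    proof
      assume y0: "y = (\<lambda>_. 0)"
      have "y j = 0" "y l = 0" "y i = 0" using y0 by auto
      then have "g = 0" using yc[of j] pc wc ij bet by auto
      then show False using \<open>y l = 0\<close> \<open>y i = 0\<close> yc pc wc ij gd ab by auto
    qed
    moreover have "supp {i,j,l} y" unfolding supp_def using yc pc wc by auto
    ultimately show ?thesis using y1 y2 unfolding y_def by blast
  qed
qed

lemma ternary_zero:
  fixes B1 B2 :: "('n \<Rightarrow> complex) \<Rightarrow> ('n \<Rightarrow> complex) \<Rightarrow> complex"
  assumes b1: "bil B1" and b2: "bil B2" and ij: "i \<noteq> j" "i \<noteq> l" "j \<noteq> l"
  shows "\<exists>x. x \<noteq> (\<lambda>_. 0) \<and> supp {i,j,l} x \<and> B1 x x = 0 \<and> B2 x x = 0"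
proof -
  obtain a b where ab: "a \<noteq> 0 \<or> b \<noteq> 0" and z: "B1 (lc a (ev i) b (ev j)) (lc a (ev i) b (ev j)) = 0"
    using binary_zero[OF b1, of "ev i" "ev j"] by blast
  show ?thesis
  proof (cases "b = 0")
    case False
    show ?thesis using ternary_core[where p="lc a (ev i) b (ev j)" and \<alpha>=a and \<beta>=b, OF b1 b2 ij refl False z] .
  next
    case True
    then have a: "a \<noteq> 0" using ab by simp
    have e: "lc a (ev i) b (ev j) = lc b (ev j) a (ev i)" unfolding lc_def by (auto simp: fun_eq_iff)
    have z': "B1 (lc b (ev j) a (ev i)) (lc b (ev j) a (ev i)) = 0" using z unfolding e .
    have d: "j \<noteq> i" "j \<noteq> l" "i \<noteq> l" using ij by auto
    have "\<exists>x. x \<noteq> (\<lambda>_. 0) \<and> supp {j,i,l} x \<and> B1 x x = 0 \<and> B2 x x = 0"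
      using ternary_core[where p="lc b (ev j) a (ev i)" and \<alpha>=b and \<beta>=a, OF b1 b2 d refl a z'] .
    moreover have "{j,i,l} = {i,j,l}" by auto
    ultimately show ?thesis by metis
  qed
qed

lemma card_ge3_obtain:
  assumes "card S \<ge> 3"
  obtains i j l where "i \<in> S" "j \<in> S" "l \<in> S" "i \<noteq> j" "i \<noteq> l" "j \<noteq> l"
proof -
  have fin: "finite S" using assms by (metis card.infinite not_numeral_le_zero)
  have "S \<noteq> {}" using assms by auto
  then obtain i where i: "i \<in> S" by blast
  have "card (S - {i}) \<ge> 2" using assms i fin by (simp add: card_Diff_singleton)
  then have "S - {i} \<noteq> {}" by (metis card.empty not_numeral_le_zero)
  then obtain j where j: "j \<in> S - {i}" by blast
  have "card (S - {i} - {j}) \<ge> 1" using \<open>card (S - {i}) \<ge> 2\<close> j fin by (simp add: card_Diff_singleton)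
  then have "S - {i} - {j} \<noteq> {}" by (metis card.empty not_one_le_zero)
  then obtain l where l: "l \<in> S - {i} - {j}" by blast
  show ?thesis using that i j l by auto
qed

definition elimv :: "('n \<Rightarrow> 'a::field) \<Rightarrow> 'n \<Rightarrow> ('n \<Rightarrow> 'a) \<Rightarrow> ('n \<Rightarrow> 'a)" where
  "elimv l i0 x = x(i0 := - (\<Sum>i\<in>UNIV - {i0}. l i * x i) / l i0)"

lemma elimv_lc: "elimv l i0 (lc s x t y) = lc s (elimv l i0 x) t (elimv l i0 y)"
proof -
  have e: "(\<Sum>i\<in>UNIV-{i0}. l i * (s * x i + t * y i)) = s * (\<Sum>i\<in>UNIV-{i0}. l i * x i) + t * (\<Sum>i\<in>UNIV-{i0}. l i * y i)"
    by (simp add: sum.distrib sum_distrib_left algebra_simps)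
  show ?thesis unfolding elimv_def lc_def fun_eq_iff
  proof
    fix j show "((\<lambda>i. s * x i + t * y i)(i0 := - (\<Sum>i\<in>UNIV - {i0}. l i * (s * x i + t * y i)) / l i0)) j =
         s * (x(i0 := - (\<Sum>i\<in>UNIV - {i0}. l i * x i) / l i0)) j + t * (y(i0 := - (\<Sum>i\<in>UNIV - {i0}. l i * y i) / l i0)) j"
    proof (cases "j = i0")
      case True
      have h: "\<And>A B L. (- (s*A + t*B)) / L = s * (- A / L) + t * (- B / L)"
        by (simp add: add_divide_distrib[symmetric] algebra_simps)
      show ?thesis using True by (simp only: e fun_upd_same h)
    qed simp
  qed
qed

lemma dotp_remove: "dotp l y = l i0 * y i0 + (\<Sum>i\<in>UNIV - {i0}. l i * y i)"
  unfolding dotp_def by (simp add: sum.remove)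

lemma elim_zero_aux:
  fixes B1 B2 :: "('n::finite \<Rightarrow> complex) \<Rightarrow> ('n \<Rightarrow> complex) \<Rightarrow> complex"
  shows "length Ls = k \<Longrightarrow> bil B1 \<Longrightarrow> bil B2 \<Longrightarrow> card S \<ge> k + 3 \<Longrightarrow>
    \<exists>x. x \<noteq> (\<lambda>_. 0) \<and> supp S x \<and> (\<forall>l\<in>set Ls. dotp l x = 0) \<and> B1 x x = 0 \<and> B2 x x = 0"
proof (induction k arbitrary: Ls S B1 B2)
  case 0
  then have Ls: "Ls = []" by simp
  from 0 have "card S \<ge> 3" by simp
  then obtain i j l where "i \<in> S" "j \<in> S" "l \<in> S" and d: "i \<noteq> j" "i \<noteq> l" "j \<noteq> l"
    by (rule card_ge3_obtain)
  then obtain x where "x \<noteq> (\<lambda>_. 0)" "supp {i,j,l} x" "B1 x x = 0" "B2 x x = 0"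
    using ternary_zero[OF "0.prems"(2,3) d] by blast
  moreover have "supp S x" using \<open>supp {i,j,l} x\<close> \<open>i \<in> S\<close> \<open>j \<in> S\<close> \<open>l \<in> S\<close> unfolding supp_def by auto
  ultimately show ?case using Ls by auto
next
  case (Suc k)
  obtain l Ls0 where Ls: "Ls = l # Ls0" using Suc.prems(1) by (cases Ls) auto
  have len: "length Ls0 = k" using Suc.prems(1) Ls by simp
  show ?case
  proof (cases "\<forall>i\<in>S. l i = 0")
    case True
    obtain x where x: "x \<noteq> (\<lambda>_. 0)" "supp S x" "\<forall>l\<in>set Ls0. dotp l x = 0" "B1 x x = 0" "B2 x x = 0"
    proof -
      have "k + 3 \<le> card S" using Suc.prems(4) by simp
      from Suc.IH[OF len Suc.prems(2,3) this] show ?thesis using that by blast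
    qed
    have "dotp l x = 0" unfolding dotp_def using True x(2) unfolding supp_def
      by (intro sum.neutral) auto
    then show ?thesis using x Ls by auto
  next
    case False
    then obtain i0 where i0: "i0 \<in> S" "l i0 \<noteq> 0" by blast
    define \<sigma> where "\<sigma> = elimv l i0"
    define C1 where "C1 x y = B1 (\<sigma> x) (\<sigma> y)" for x y
    define C2 where "C2 x y = B2 (\<sigma> x) (\<sigma> y)" for x y
    define red where "red l' = (\<lambda>j. if j = i0 then 0 else l' j - l' i0 * l j / l i0)" for l'
    have c1: "bil C1" using Suc.prems(2) unfolding bil_def C1_def \<sigma>_def elimv_lc by simp
    have c2: "bil C2" using Suc.prems(3) unfolding bil_def C2_def \<sigma>_def elimv_lc by simp
    have fin: "finite S"
    proof (rule ccontr)
      assume "infinite S" then have "card S = 0" by simp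
      then show False using Suc.prems(4) by simp
    qed
    have ck: "card (S - {i0}) \<ge> k + 3" using Suc.prems(4) i0 fin by (simp add: card_Diff_singleton)
    then obtain x where x: "x \<noteq> (\<lambda>_. 0)" "supp (S - {i0}) x" "\<forall>l'\<in>set (map red Ls0). dotp l' x = 0"
        "C1 x x = 0" "C2 x x = 0"
      using Suc.IH[OF _ c1 c2 ck, of "map red Ls0"] len by auto
    define y where "y = \<sigma> x"
    have yi: "y i = x i" if "i \<noteq> i0" for i unfolding y_def \<sigma>_def elimv_def using that by simp
    have xi0: "x i0 = 0" using x(2) unfolding supp_def by auto
    have "y \<noteq> (\<lambda>_. 0)"
    proof
      assume "y = (\<lambda>_. 0)"
      then have "x i = 0" for i using yi xi0 by (cases "i = i0") auto
      then show False using x(1) by auto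
    qed
    moreover have "supp S y" unfolding supp_def
    proof (intro allI impI)
      fix i assume "i \<notin> S"
      then have "i \<noteq> i0" "i \<notin> S - {i0}" using i0 by auto
      then show "y i = 0" using yi x(2) unfolding supp_def by auto
    qed
    moreover have "dotp l y = 0" unfolding dotp_remove[of l y i0]
      using i0 yi by (simp add: y_def \<sigma>_def elimv_def)
    moreover have "dotp l' y = 0" if "l' \<in> set Ls0" for l'
    proof -
      have "dotp (red l') x = 0" using x(3) that by auto
      moreover have "dotp (red l') x = dotp l' y"
      proof -
        have "dotp (red l') x = (\<Sum>i\<in>UNIV - {i0}. (l' i - l' i0 * l i / l i0) * x i)"
        proof -
          have "(\<Sum>i\<in>UNIV-{i0}. red l' i * x i) = (\<Sum>i\<in>UNIV - {i0}. (l' i - l' i0 * l i / l i0) * x i)"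
            by (rule sum.cong) (auto simp: red_def)
          then show ?thesis unfolding dotp_remove[of "red l'" x i0] by (simp add: xi0)
        qed
        also have "\<dots> = (\<Sum>i\<in>UNIV - {i0}. l' i * x i) - l' i0 / l i0 * (\<Sum>i\<in>UNIV - {i0}. l i * x i)"
          by (simp add: algebra_simps sum_subtractf sum_distrib_left)
        also have "\<dots> = dotp l' y"
          unfolding dotp_remove[of l' y i0] using yi by (simp add: y_def \<sigma>_def elimv_def algebra_simps)
        finally show ?thesis .
      qed
      ultimately show ?thesis by simp
    qed
    moreover have "B1 y y = 0" "B2 y y = 0" using x(4,5) unfolding C1_def C2_def y_def by auto
    ultimately show ?thesis using Ls by auto
  qed
qed

lemma elim_zero:
  fixes B1 B2 :: "('n::finite \<Rightarrow> complex) \<Rightarrow> ('n \<Rightarrow> complex) \<Rightarrow> complex"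
  shows "bil B1 \<Longrightarrow> bil B2 \<Longrightarrow> card S \<ge> length Ls + 3 \<Longrightarrow>
    \<exists>x. x \<noteq> (\<lambda>_. 0) \<and> supp S x \<and> (\<forall>l\<in>set Ls. dotp l x = 0) \<and> B1 x x = 0 \<and> B2 x x = 0"
  using elim_zero_aux by blast



definition proj1 :: "('n::finite \<Rightarrow> rat) \<Rightarrow> ('n \<Rightarrow> rat) \<Rightarrow> ('n \<Rightarrow> 'a::field_char_0) \<Rightarrow> ('n \<Rightarrow> 'a)" where
 "proj1 l v y = (\<lambda>i. y i - (dotp (emb l) y / dotp (emb l) (emb v)) * emb v i)"

lemma dotp_emb: "dotp (emb l) (emb x) = (of_rat (dotp l x) :: 'a::field_char_0)"
  unfolding dotp_def emb_def by (simp add: of_rat_sum of_rat_mult)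

lemma proj1_emb: "proj1 l v (emb x) = (emb (proj1 l v x) :: 'n::finite \<Rightarrow> 'a::field_char_0)"
  unfolding proj1_def dotp_emb by (simp add: emb_def of_rat_diff of_rat_mult of_rat_divide)

lemma dotp_proj1: "dotp (emb m) (proj1 l v y) = dotp (emb m) y - (dotp (emb l) y / dotp (emb l) (emb v)) * dotp (emb m) (emb v)"
proof -
  have "\<And>k. dotp (emb m) (\<lambda>i. y i - k * emb v i) = dotp (emb m) y - k * dotp (emb m) (emb v)"
    by (simp add: dotp_def algebra_simps sum_subtractf sum_distrib_left)
  then show ?thesis unfolding proj1_def .
qed

lemma dotp_proj1_self: "dotp (emb l) (emb v) \<noteq> (0::'a::field_char_0) \<Longrightarrow> dotp (emb l) (proj1 l v (y::'n::finite \<Rightarrow> 'a)) = 0"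
  unfolding dotp_proj1 by simp

lemma proj1_id: "dotp (emb l) y = 0 \<Longrightarrow> proj1 l v y = y"
  unfolding proj1_def by simp

lemma vlp_proj1: "vlp (proj1 l v)"
  unfolding proj1_def dotp_def divide_inverse
  by (intro vlpI slp_diff slp_mult slp_sum slp_const slp_coord)


lemma vlp_proj1_comp: assumes "vlp f" shows "vlp (\<lambda>x. proj1 l v (f x))"
  unfolding proj1_def dotp_def divide_inverse
  by (intro vlpI slp_diff slp_mult slp_sum slp_const slp_vlp[OF assms])

lemma dotp_rat: "dotp (emb l) (x :: 'n::finite \<Rightarrow> rat) = dotp l x" by simp

lemma bil_T3: "bil (\<lambda>x y. T3 c x y w)"
  unfolding bil_def by (simp add: T3_lin)

definition projM :: "('n::finite \<Rightarrow> rat) \<Rightarrow> ('n \<Rightarrow> rat) \<Rightarrow> ('n \<Rightarrow> rat) \<Rightarrow> ('n \<Rightarrow> rat) \<Rightarrow> ('n \<Rightarrow> 'a::field_char_0) \<Rightarrow> ('n \<Rightarrow> 'a)" where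
  "projM gv mu v1 v2 y = proj1 mu v2 (proj1 gv v1 y)"

context
  fixes gv mu v1 v2 :: "'n::finite \<Rightarrow> rat"
  assumes h1: "dotp gv v1 \<noteq> 0" and h2: "dotp mu v2 \<noteq> 0" and h3: "dotp gv v2 = 0"
begin

lemma pg: "dotp (emb gv) (projM gv mu v1 v2 y) = (0::'a::field_char_0)"
proof -
  have g1: "dotp (emb gv) (emb v1) \<noteq> (0::'a)" using h1 by (simp add: dotp_emb)
  have g3: "dotp (emb gv) (emb v2) = (0::'a)" using h3 by (simp add: dotp_emb)
  have "dotp (emb gv) (proj1 mu v2 Y) = dotp (emb gv) Y" for Y :: "'n \<Rightarrow> 'a"
    using dotp_proj1[of gv mu v2 Y] g3 by simp
  then show ?thesis unfolding projM_def using dotp_proj1_self[OF g1, of y] by simp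
qed

lemma pm: "dotp (emb mu) (projM gv mu v1 v2 y) = (0::'a::field_char_0)"
proof -
  have g2: "dotp (emb mu) (emb v2) \<noteq> (0::'a)" using h2 by (simp add: dotp_emb)
  show ?thesis unfolding projM_def using dotp_proj1_self[OF g2] by simp
qed

end

lemma pid: "dotp (emb gv) y = 0 \<Longrightarrow> dotp (emb mu) y = 0 \<Longrightarrow> projM gv mu v1 v2 y = y"
  unfolding projM_def by (simp add: proj1_id)

lemma projM_emb: "projM gv mu v1 v2 (emb x) = (emb (projM gv mu v1 v2 x) :: 'n::finite \<Rightarrow> 'a::field_char_0)"
  unfolding projM_def proj1_emb ..

lemma vlp_projM: "vlp (projM gv mu v1 v2)"
  unfolding projM_def by (intro vlp_proj1_comp vlp_proj1)

lemma projM_dec: "y = lc (dotp (emb gv) y / dotp (emb gv) (emb v1)) (emb v1) 1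
    (lc (dotp (emb mu) (proj1 gv v1 y) / dotp (emb mu) (emb v2)) (emb v2) 1 (projM gv mu v1 v2 y))"
  unfolding projM_def lc_def proj1_def[of mu v2] by (simp add: proj1_def)

lemma no_sing:
  fixes c :: "('n::finite) cubic" and gv mu v1 v2 :: "'n \<Rightarrow> rat"
  assumes card: "CARD('n) \<ge> 5" and sm: "smooth_cubic c"
    and h1: "dotp gv v1 \<noteq> 0" and h2: "dotp mu v2 \<noteq> 0" and h3: "dotp gv v2 = 0"
    and M: "\<And>x. dotp gv x = 0 \<Longrightarrow> dotp mu x = 0 \<Longrightarrow> cform c x = 0"
  shows False
proof -
  note pg' = pg[OF h1 h2 h3] and pm' = pm[OF h1 h2 h3]
  have Fz: "cform c (projM gv mu v1 v2 z) = 0" for z :: "'n \<Rightarrow> complex"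
  proof (rule transfer_zero[where h="\<lambda>z. cform c (projM gv mu v1 v2 z)"])
    show "slp (\<lambda>z. cform c (projM gv mu v1 v2 (z :: 'n \<Rightarrow> complex)))"
      by (intro slp_cform vlp_projM)
    fix x :: "'n \<Rightarrow> rat"
    have "cform c (projM gv mu v1 v2 (emb x) :: 'n \<Rightarrow> complex) = of_rat (cform c (projM gv mu v1 v2 x))"
      unfolding projM_emb cform_emb ..
    moreover have "cform c (projM gv mu v1 v2 x) = 0"
      using M pg'[of x] pm'[of x] by simp
    ultimately show "cform c (projM gv mu v1 v2 (emb x) :: 'n \<Rightarrow> complex) = 0" by simp
  qed
  have FM: "cform c y = 0" if "dotp (emb gv) y = 0" "dotp (emb mu) y = 0" for y :: "'n \<Rightarrow> complex"
    using Fz[of y] pid[OF that] by simp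
  have "card (UNIV :: 'n set) \<ge> length [emb gv, emb mu] + 3" using card by simp
  from elim_zero[OF bil_T3[of c "emb v1"] bil_T3[of c "emb v2"] this]
  obtain x :: "'n \<Rightarrow> complex" where x: "x \<noteq> (\<lambda>_. 0)" "dotp (emb gv) x = 0" "dotp (emb mu) x = 0"
      "T3 c x x (emb v1) = 0" "T3 c x x (emb v2) = 0"
    by auto
  have "cpartial c m x = 0" for m
  proof -
    define y :: "'n \<Rightarrow> complex" where "y = ev m"
    define Y where "Y = projM gv mu v1 v2 y"
    obtain a b where dec: "y = lc a (emb v1) 1 (lc b (emb v2) 1 Y)"
      using projM_dec unfolding Y_def by blast
    have t2: "T3 c x x Y = 0"
    proof -
      have m1: "cform c (lc 1 x 1 Y) = 0" using x pg'[of y] pm'[of y] unfolding Y_def by (intro FM) (simp_all add: dotp_lc)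
      have m2: "cform c (lc 1 x (-1) Y) = 0" using x pg'[of y] pm'[of y] unfolding Y_def by (intro FM) (simp_all add: dotp_lc)
      have m4: "cform c Y = 0" unfolding Y_def using Fz .
      have "cform c (lc 1 x 1 Y) - cform c (lc 1 x (-1) Y) = 6 * T3 c x x Y + 2 * cform c Y"
        unfolding cform_lc by (simp add: cform_T3)
      then show "T3 c x x Y = 0" using m1 m2 m4 by simp
    qed
    have s1: "T3 c (emb v1) x x = 0" using x(4) T3_sym by metis
    have s2: "T3 c (emb v2) x x = 0" using x(5) T3_sym by metis
    have s3: "T3 c Y x x = 0" using t2 T3_sym by metis
    have "T3 c y x x = 0"
      by (subst dec) (simp only: T3_lin1 s1 s2 s3 mult_zero_right add_0)
    then show ?thesis unfolding cpartial_ev y_def by simp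
  qed
  then have "x = (\<lambda>_. 0)" using sm unfolding smooth_cubic_def by blast
  then show False using x(1) by simp
qed



lemma grad_nonzero:
  fixes x :: "'n::finite \<Rightarrow> rat"
  assumes "smooth_cubic c" "x \<noteq> (\<lambda>_. 0)"
  shows "\<exists>m. cpartial c m x \<noteq> 0"
proof (rule ccontr)
  assume "\<not> ?thesis"
  then have "\<forall>m. cpartial c m (emb x :: 'n \<Rightarrow> complex) = 0" by (simp add: cpartial_emb)
  then have "(emb x :: 'n \<Rightarrow> complex) = (\<lambda>_. 0)" using assms(1) unfolding smooth_cubic_def to_cplx_def by blast
  then have "x = (\<lambda>_. 0)" unfolding emb_def by (simp add: fun_eq_iff)
  then show False using assms(2) by simp
qed

lemma lc_fun: "(\<lambda>i. s * A i + t * B i) = lc s A t B" unfolding lc_def ..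

lemma indep_lemma:
  fixes U W :: "'n::finite \<Rightarrow> rat"
  assumes "U \<noteq> (\<lambda>_. 0)" "T3 c U U U = 0" "T3 c U U W \<noteq> 0 \<or> T3 c U W U \<noteq> 0 \<or> T3 c W U U \<noteq> 0"
  shows "\<forall>s t. (\<forall>i. s * U i + t * W i = 0) \<longrightarrow> s = 0 \<and> t = 0"
proof (intro allI impI)
  fix s t assume h: "\<forall>i. s * U i + t * W i = 0"
  then have "lc s U t W = (\<lambda>_. 0)" unfolding lc_def by auto
  then have "T3 c U U (lc s U t W) = 0" by simp
  then have "t * T3 c U U W = 0" using assms(2) by (simp add: T3_lin)
  moreover have "T3 c U U W \<noteq> 0" using assms(3) T3_sym by metis
  ultimately have t: "t = 0" by simp
  then have "\<forall>i. s * U i = 0" using h by simp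
  then have "s = 0" using assms(1) by (metis (full_types) ext mult_eq_0_iff)
  then show "s = 0 \<and> t = 0" using t by simp
qed

lemma span_tangent:
  fixes U W :: "'n::finite \<Rightarrow> rat"
  assumes U: "U \<in> qspan c P0" and U0: "U \<noteq> (\<lambda>_. 0)" and FU: "T3 c U U U = 0" and FW: "T3 c W W W = 0"
    and tW: "T3 c U U W = 0" and nW: "T3 c U W W \<noteq> 0"
  shows "W \<in> qspan c P0"
proof (rule qspan.step[OF U U])
  have ind: "\<forall>s t. (\<forall>i. s * U i + t * W i = 0) \<longrightarrow> s = 0 \<and> t = 0"
  proof (intro allI impI)
    fix s t assume h: "\<forall>i. s * U i + t * W i = 0"
    then have "lc s U t W = (\<lambda>_. 0)" unfolding lc_def by auto
    then have "T3 c U W (lc s U t W) = 0" by simp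
    then have "s * T3 c U W U + t * T3 c U W W = 0" by (simp add: T3_lin)
    moreover have "T3 c U W U = 0" using tW T3_sym by metis
    ultimately have t: "t = 0" using nW by simp
    then have "\<forall>i. s * U i = 0" using h by simp
    then have "s = 0" using U0 by (metis (full_types) ext mult_eq_0_iff)
    then show "s = 0 \<and> t = 0" using t by simp
  qed
  have cf: "cform c (\<lambda>i. s * U i + t * W i) = (3 * T3 c U W W) * (0 * s - 1 * t) * (0 * s - 1 * t) * (1 * s - 0 * t)" for s t
    unfolding lc_fun cform_lc FU FW tW by (simp add: power2_eq_square)
  show "line_meets c U U W" unfolding line_meets_def
    apply (rule exI[of _ U], rule exI[of _ W])
    apply (intro conjI ind)
    apply (rule exI[of _ 1], rule exI[of _ 0], rule exI[of _ 1], rule exI[of _ 0], rule exI[of _ 0], rule exI[of _ 1])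
    apply (rule exI[of _ 1], rule exI[of _ 1], rule exI[of _ 1], rule exI[of _ "3 * T3 c U W W"])
    using nW cf by simp
qed

lemma span_secant:
  fixes Q A :: "'n::finite \<Rightarrow> rat"
  assumes A: "A \<in> qspan c P0" and B: "lc (T3 c Q A A) Q (- T3 c Q Q A) A \<in> qspan c P0"
    and Q0: "Q \<noteq> (\<lambda>_. 0)" and FQ: "T3 c Q Q Q = 0" and FA: "T3 c A A A = 0" and nz: "T3 c Q Q A \<noteq> 0"
  shows "Q \<in> qspan c P0"
proof (rule qspan.step[OF A B])
  have ind: "\<forall>s t. (\<forall>i. s * Q i + t * A i = 0) \<longrightarrow> s = 0 \<and> t = 0"
  proof (intro allI impI)
    fix s t assume h: "\<forall>i. s * Q i + t * A i = 0"
    then have "lc s Q t A = (\<lambda>_. 0)" unfolding lc_def by auto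
    then have "T3 c Q Q (lc s Q t A) = 0" by simp
    then have "s * T3 c Q Q Q + t * T3 c Q Q A = 0" by (simp add: T3_lin)
    then have t: "t = 0" using nz FQ by simp
    then have "\<forall>i. s * Q i = 0" using h by simp
    then have "s = 0" using Q0 by (metis (full_types) ext mult_eq_0_iff)
    then show "s = 0 \<and> t = 0" using t by simp
  qed
  have cf: "cform c (\<lambda>i. s * Q i + t * A i) = 3 * (1 * s - 0 * t) * ((- T3 c Q Q A) * s - (T3 c Q A A) * t) * (0 * s - 1 * t)" for s t
    unfolding lc_fun cform_lc FQ FA by (simp add: power2_eq_square algebra_simps)
  show "line_meets c A (lc (T3 c Q A A) Q (- T3 c Q Q A) A) Q" unfolding line_meets_def
    apply (rule exI[of _ Q], rule exI[of _ A])
    apply (intro conjI ind)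
    apply (rule exI[of _ 0], rule exI[of _ 1], rule exI[of _ "T3 c Q A A"], rule exI[of _ "- T3 c Q Q A"], rule exI[of _ 1], rule exI[of _ 0])
    apply (rule exI[of _ 1], rule exI[of _ 1], rule exI[of _ 1], rule exI[of _ 3])
    using nz cf by (simp add: lc_def)
qed

lemma base_self: "P \<in> qspan c P"
  using qspan.base[of 1 P c] by simp

lemma final_step:
  fixes P Q R :: "'n::finite \<Rightarrow> rat"
  assumes P0: "P \<noteq> (\<lambda>_. 0)" and Q0: "Q \<noteq> (\<lambda>_. 0)"
    and FP: "T3 c P P P = 0" and FQ: "T3 c Q Q Q = 0" and PPQ: "T3 c P P Q = 0" and PQQ: "T3 c P Q Q = 0"
    and PPR: "T3 c P P R = 0"
    and q0: "T3 c P R R \<noteq> 0" and b0: "T3 c Q Q R \<noteq> 0"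
    and phi0: "3 * (T3 c P R R)^2 * T3 c Q Q R + 4 * T3 c R R R * (T3 c P Q R)^2
       - 6 * T3 c P R R * T3 c Q R R * T3 c P Q R \<noteq> 0"
  shows "Q \<in> qspan c P"
proof -
  define q where "q = T3 c P R R"
  define b where "b = T3 c Q Q R"
  define cc where "cc = T3 c P Q R"
  define g where "g = T3 c Q R R"
  define f where "f = T3 c R R R"
  define A where "A = lc (- f) P (3 * q) R"
  have FA: "T3 c A A A = 0" unfolding A_def f_def q_def using FP PPR
    by (simp add: T3_lin T3_sym algebra_simps power2_eq_square power3_eq_cube)
  have PPA: "T3 c P P A = 0" unfolding A_def using FP PPR by (simp add: T3_lin)
  have PAA: "T3 c P A A = 9 * q^3" unfolding A_def q_def using FP PPR
    by (simp add: T3_lin T3_sym algebra_simps power2_eq_square power3_eq_cube)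
  have qne: "q \<noteq> 0" using q0 q_def by simp
  have PAA0: "T3 c P A A \<noteq> 0" using PAA qne by simp
  have A0: "A \<noteq> (\<lambda>_. 0)" using PAA0 by auto
  have QQA: "T3 c Q Q A = 3 * q * b" unfolding A_def b_def q_def using PQQ
    by (simp add: T3_lin T3_sym algebra_simps)
  have QAA: "T3 c Q A A = f^2 * T3 c Q P P - 6 * f * q * cc + 9 * q^2 * g"
    unfolding A_def cc_def g_def q_def f_def
    by (simp add: T3_lin T3_sym algebra_simps power2_eq_square)
  have PQA: "T3 c P Q A = 3 * q * cc" unfolding A_def cc_def q_def using PPQ
    by (simp add: T3_lin T3_sym algebra_simps)
  define B where "B = lc (T3 c Q A A) Q (- T3 c Q Q A) A"
  have FB: "T3 c B B B = 0" unfolding B_def using FQ FA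
    by (simp add: T3_lin T3_sym algebra_simps power2_eq_square power3_eq_cube)
  have PPB: "T3 c P P B = 0" unfolding B_def using PPQ PPA by (simp add: T3_lin)
  have PBB: "T3 c P B B = (T3 c Q Q A)^2 * T3 c P A A - 2 * T3 c Q A A * T3 c Q Q A * T3 c P Q A"
    unfolding B_def using PQQ by (simp add: T3_lin T3_sym algebra_simps power2_eq_square)
  have QPP: "T3 c Q P P = 0" using PPQ T3_sym by metis
  have PBB': "T3 c P B B = 27 * q^3 * b * (3 * q^2 * b + 4 * f * cc^2 - 6 * q * g * cc)"
    unfolding PBB QQA PAA QAA PQA using QPP
    by (simp add: algebra_simps power2_eq_square power3_eq_cube)
  have bne: "b \<noteq> 0" using b0 b_def by simp
  have phne: "3 * q^2 * b + 4 * f * cc^2 - 6 * q * g * cc \<noteq> 0"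
    using phi0 unfolding q_def b_def f_def cc_def g_def .
  have PBB0: "T3 c P B B \<noteq> 0" unfolding PBB' using qne bne phne by simp
  have Aspan: "A \<in> qspan c P" by (rule span_tangent[OF base_self P0 FP FA PPA PAA0])
  have Bspan: "B \<in> qspan c P" by (rule span_tangent[OF base_self P0 FP FB PPB PBB0])
  have QQA0: "T3 c Q Q A \<noteq> 0" unfolding QQA using qne bne by simp
  show ?thesis using span_secant[OF Aspan _ Q0 FQ FA QQA0] Bspan unfolding B_def by blast
qed



lemma to_cplx_emb: "to_cplx = emb" unfolding to_cplx_def emb_def by (simp add: fun_eq_iff)

lemma HP_iff: "dotp (\<lambda>m. cpartial c m P) x = 3 * T3 c P P x"
  unfolding grad_dotp by (simp add: T3_sym)

lemma exists_q:
  fixes c :: "('n::finite) cubic" and P :: "'n \<Rightarrow> rat"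
  assumes sm: "smooth_cubic c" and P0: "P \<noteq> (\<lambda>_. 0)" and FP: "T3 c P P P = 0" and ne: "\<not> eckardt c P"
  shows "\<exists>R. T3 c P P R = 0 \<and> T3 c P R R \<noteq> 0"
proof (rule ccontr)
  assume nn: "\<not> ?thesis"
  define Pc :: "'n \<Rightarrow> complex" where "Pc = emb P"
  obtain R :: "'n \<Rightarrow> complex" and s t where R: "cform c R = 0" "in_tangent c Pc R"
    and st: "\<not> (cform c (\<lambda>i. s * Pc i + t * R i) = 0 \<and> in_tangent c Pc (\<lambda>i. s * Pc i + t * R i))"
    using ne unfolding eckardt_def to_cplx_emb Pc_def by blast
  have FPc: "T3 c Pc Pc Pc = 0" unfolding Pc_def T3_emb FP by simp
  have RPP: "T3 c R Pc Pc = 0" using R(2) unfolding in_tangent_iff .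
  have PPR: "T3 c Pc Pc R = 0" using RPP by (simp add: T3_sym)
  have "in_tangent c Pc (\<lambda>i. s * Pc i + t * R i)" unfolding lc_fun in_tangent_iff T3_lin1 FPc RPP by simp
  then have "cform c (lc s Pc t R) \<noteq> 0" using st unfolding lc_fun by blast
  then have PRR: "T3 c Pc R R \<noteq> 0" unfolding cform_lc using FPc PPR R(1) unfolding cform_T3 by auto
  obtain m0 where m0: "cpartial c m0 P \<noteq> 0" using grad_nonzero[OF sm P0] by blast
  define gP where "gP = (\<lambda>m. cpartial c m P)"
  define v1 :: "'n \<Rightarrow> rat" where "v1 = ev m0"
  have gv1: "dotp gP v1 \<noteq> 0" unfolding gP_def v1_def dotp_ev using m0 .
  have gv1c: "dotp (emb gP) (emb v1) \<noteq> (0::complex)" using gv1 by (simp add: dotp_emb)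
  have hz: "T3 c Pc (proj1 gP v1 z) (proj1 gP v1 z) = 0" for z
  proof (rule transfer_zero[where h="\<lambda>z. T3 c Pc (proj1 gP v1 z) (proj1 gP v1 z)"])
    show "slp (\<lambda>z. T3 c Pc (proj1 gP v1 z) (proj1 gP v1 z))" by (intro slp_T3 vlp_const vlp_proj1)
    fix x :: "'n \<Rightarrow> rat"
    define y where "y = proj1 gP v1 x"
    have "dotp (emb gP) y = 0" unfolding y_def using dotp_proj1_self[of gP v1 x] gv1 by simp
    then have "dotp gP y = 0" by simp
    then have "T3 c P P y = 0" unfolding gP_def HP_iff by simp
    then have "T3 c P y y = 0" using nn by blast
    then show "T3 c Pc (proj1 gP v1 (emb x)) (proj1 gP v1 (emb x)) = 0" unfolding Pc_def proj1_emb y_def[symmetric] T3_emb by simp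
  qed
  moreover have pr: "proj1 gP v1 R = R"
  proof (rule proj1_id)
    have "dotp (emb gP) R = dotp (\<lambda>m. cpartial c m Pc) R"
      unfolding gP_def Pc_def emb_def cpartial_emb[symmetric] ..
    also have "\<dots> = 0" unfolding grad_dotp RPP by simp
    finally show "dotp (emb gP) R = 0" .
  qed
  ultimately have "T3 c Pc R R = 0" using hz[of R] pr by simp
  then show False using PRR by simp
qed

lemma exists_b:
  fixes c :: "('n::finite) cubic" and P Q :: "'n \<Rightarrow> rat"
  assumes sm: "smooth_cubic c" and P0: "P \<noteq> (\<lambda>_. 0)" and Q0: "Q \<noteq> (\<lambda>_. 0)"
    and ne: "tangent_hyperplane c Q \<noteq> tangent_hyperplane c P"
  shows "\<exists>R. T3 c P P R = 0 \<and> T3 c Q Q R \<noteq> 0"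
proof (rule ccontr)
  assume nn: "\<not> ?thesis"
  obtain m0 where m0: "cpartial c m0 P \<noteq> 0" using grad_nonzero[OF sm P0] by blast
  obtain m1 where m1: "cpartial c m1 Q \<noteq> 0" using grad_nonzero[OF sm Q0] by blast
  define gP where "gP = (\<lambda>m. cpartial c m P)"
  define v1 :: "'n \<Rightarrow> rat" where "v1 = ev m0"
  have gv1: "dotp gP v1 \<noteq> 0" unfolding gP_def v1_def dotp_ev using m0 .
  have key: "T3 c Q Q x = (dotp gP x / dotp gP v1) * T3 c Q Q v1" for x
  proof -
    define y where "y = proj1 gP v1 x"
    have "dotp (emb gP) y = 0" unfolding y_def using dotp_proj1_self[of gP v1 x] gv1 by simp
    then have "dotp gP y = 0" by simp
    then have "T3 c P P y = 0" unfolding gP_def HP_iff by simp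
    then have "T3 c Q Q y = 0" using nn by blast
    moreover have "y = lc 1 x (- (dotp gP x / dotp gP v1)) v1" unfolding y_def proj1_def lc_def by simp
    ultimately show ?thesis by (simp add: T3_lin)
  qed
  have qv: "T3 c Q Q v1 \<noteq> 0"
  proof
    assume "T3 c Q Q v1 = 0"
    then have "T3 c Q Q (ev m1) = 0" using key[of "ev m1"] by simp
    then have "cpartial c m1 Q = 0" unfolding cpartial_ev by (simp add: T3_sym)
    then show False using m1 by simp
  qed
  have "tangent_hyperplane c Q = tangent_hyperplane c P"
  proof -
    have "in_tangent c Q x \<longleftrightarrow> in_tangent c P x" for x
    proof -
      have "in_tangent c Q x \<longleftrightarrow> T3 c Q Q x = 0" unfolding in_tangent_iff by (simp add: T3_sym)
      also have "\<dots> \<longleftrightarrow> dotp gP x = 0" using key[of x] qv gv1 by simp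
      also have "\<dots> \<longleftrightarrow> in_tangent c P x" unfolding gP_def HP_iff in_tangent_iff by (simp add: T3_sym)
      finally show ?thesis .
    qed
    then show ?thesis unfolding tangent_hyperplane_def by auto
  qed
  then show False using ne by simp
qed



definition phi :: "('n::finite) cubic \<Rightarrow> ('n \<Rightarrow> rat) \<Rightarrow> ('n \<Rightarrow> rat) \<Rightarrow> ('n \<Rightarrow> rat) \<Rightarrow> rat" where
  "phi c P Q R = 3 * (T3 c P R R)^2 * T3 c Q Q R + 4 * T3 c R R R * (T3 c P Q R)^2 - 6 * T3 c P R R * T3 c Q R R * T3 c P Q R"

lemma poly6_zero:
  fixes a1 a2 a3 a4 a5 a6 :: rat
  assumes "\<And>z. a1*z + a2*z^2 + a3*z^3 + a4*z^4 + a5*z^5 + a6*z^6 = 0"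
  shows "a1 = 0 \<and> a2 = 0 \<and> a3 = 0 \<and> a4 = 0 \<and> a5 = 0 \<and> a6 = 0"
proof -
  define p where "p = [:0, a1, a2, a3, a4, a5, a6:]"
  have "poly p z = a1*z + a2*z^2 + a3*z^3 + a4*z^4 + a5*z^5 + a6*z^6" for z
    unfolding p_def by (simp add: algebra_simps eval_nat_numeral)
  then have "\<forall>z. poly p z = 0" using assms by simp
  then have "p = 0" using poly_all_0_iff_0 by blast
  then show ?thesis unfolding p_def by simp
qed

lemma key_identity:
  assumes FQ: "T3 c Q Q Q = 0"
  shows "cform c (lc (2 * T3 c P Q h) h (- T3 c P h h) Q) = 2 * T3 c P Q h * phi c P Q h"
  unfolding phi_def cform_lc FQ
  by (simp add: T3_sym algebra_simps power2_eq_square power3_eq_cube)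

lemma expansion6:
  assumes FQ: "T3 c Q Q Q = 0"
  shows "cform c (lc (2 * z) (lc z R0 1 u) (- q0) Q) =
     z * (6 * q0^2 * T3 c Q Q u) + z^2 * (6 * q0^2 * T3 c Q Q R0 - 12 * q0 * T3 c Q u u)
   + z^3 * (8 * T3 c u u u - 24 * q0 * T3 c Q R0 u) + z^4 * (24 * T3 c R0 u u - 12 * q0 * T3 c Q R0 R0)
   + z^5 * (24 * T3 c R0 R0 u) + z^6 * (8 * T3 c R0 R0 R0)"
  unfolding cform_T3 using FQ
  by (simp add: T3_lin T3_sym algebra_simps power2_eq_square power3_eq_cube eval_nat_numeral)

lemma degenerate:
  fixes c :: "('n::finite) cubic" and P Q R0 :: "'n \<Rightarrow> rat"
  assumes card: "CARD('n) \<ge> 5" and sm: "smooth_cubic c" and P0: "P \<noteq> (\<lambda>_. 0)"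
    and FP: "T3 c P P P = 0" and FQ: "T3 c Q Q Q = 0" and PPQ: "T3 c P P Q = 0" and PQQ: "T3 c P Q Q = 0"
    and R0a: "T3 c P P R0 = 0" and R0b: "T3 c P Q R0 = 1" and R0c: "T3 c P R0 R0 = 0"
    and ph0: "\<And>R. T3 c P P R = 0 \<Longrightarrow> phi c P Q R = 0"
  shows False
proof -
  obtain m0 where m0: "cpartial c m0 P \<noteq> 0" using grad_nonzero[OF sm P0] by blast
  define gP where "gP = (\<lambda>m. cpartial c m P)"
  define v1 :: "'n \<Rightarrow> rat" where "v1 = ev m0"
  have gv1: "dotp gP v1 \<noteq> 0" unfolding gP_def v1_def dotp_ev using m0 .
  have HP: "dotp gP x = 0 \<longleftrightarrow> T3 c P P x = 0" for x unfolding gP_def HP_iff by simp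
  define inW where "inW u \<longleftrightarrow> T3 c P P u = 0 \<and> T3 c P Q u = 0 \<and> T3 c P u R0 = 0" for u
  have clos: "inW u \<Longrightarrow> inW w \<Longrightarrow> inW (lc a u b w)" for u w a b
    unfolding inW_def by (simp add: T3_lin)
  have ident: "T3 c P u u ^ 2 * T3 c Q Q u = 0 \<and> 6 * (T3 c P u u)^2 * T3 c Q Q R0 - 12 * T3 c P u u * T3 c Q u u = 0
     \<and> 8 * T3 c u u u - 24 * T3 c P u u * T3 c Q R0 u = 0 \<and> 24 * T3 c R0 u u - 12 * T3 c P u u * T3 c Q R0 R0 = 0
     \<and> T3 c R0 R0 u = 0 \<and> T3 c R0 R0 R0 = 0" if u: "inW u" for u
  proof -
    have z0: "cform c (lc (2 * z) (lc z R0 1 u) (- T3 c P u u) Q) = 0" for z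
    proof -
      define h where "h = lc z R0 1 u"
      have hPQ: "T3 c P Q h = z" unfolding h_def using u R0b unfolding inW_def by (simp add: T3_lin)
      have hPh: "T3 c P h h = T3 c P u u" unfolding h_def using u R0c unfolding inW_def by (simp add: T3_lin T3_sym)
      have hPP: "T3 c P P h = 0" unfolding h_def using u R0a unfolding inW_def by (simp add: T3_lin)
      have "cform c (lc (2 * T3 c P Q h) h (- T3 c P h h) Q) = 2 * T3 c P Q h * phi c P Q h"
        by (rule key_identity[OF FQ])
      also have "\<dots> = 0" using ph0[OF hPP] by simp
      finally have "cform c (lc (2 * T3 c P Q h) h (- T3 c P h h) Q) = 0" .
      then have "cform c (lc (2 * z) h (- T3 c P u u) Q) = 0" by (simp only: hPQ hPh)
      then show ?thesis unfolding h_def .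
    qed
    have "(6 * (T3 c P u u)^2 * T3 c Q Q u) * z + (6 * (T3 c P u u)^2 * T3 c Q Q R0 - 12 * T3 c P u u * T3 c Q u u) * z^2
      + (8 * T3 c u u u - 24 * T3 c P u u * T3 c Q R0 u) * z^3 + (24 * T3 c R0 u u - 12 * T3 c P u u * T3 c Q R0 R0) * z^4
      + (24 * T3 c R0 R0 u) * z^5 + (8 * T3 c R0 R0 R0) * z^6 = 0" for z
      using z0[of z] unfolding expansion6[OF FQ] by (simp add: algebra_simps)
    from poly6_zero[OF this] show ?thesis by simp
  qed
  have slpq: "slp (\<lambda>x. T3 c P x x)" by (intro slp_T3 vlp_const vlp_id)
  have slpb: "slp (\<lambda>x. T3 c Q Q x)" by (intro slp_T3 vlp_const vlp_id)
  have slpg: "slp (\<lambda>x. 2 * T3 c Q x x - T3 c P x x * T3 c Q Q R0)"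
    by (intro slp_diff slp_mult slp_const slp_T3 vlp_const vlp_id)
  show False
  proof (cases "\<exists>u0. inW u0 \<and> T3 c P u0 u0 \<noteq> 0")
    case True
    then obtain u0 where u0: "inW u0" "T3 c P u0 u0 \<noteq> 0" by blast
    have D1: "T3 c Q Q u = 0" if uW: "inW u" for u
    proof (rule ccontr)
      assume ne: "T3 c Q Q u \<noteq> 0"
      obtain t where t: "T3 c P (lc (1-t) u0 t u) (lc (1-t) u0 t u) \<noteq> 0" "T3 c Q Q (lc (1-t) u0 t u) \<noteq> 0"
      proof -
        from slp_prod[where f="\<lambda>x. T3 c P x x" and g="\<lambda>x. T3 c Q Q x" and u=u0 and w=u, OF slpq slpb u0(2) ne] obtain t where
          "T3 c P (lc (1-t) u0 t u) (lc (1-t) u0 t u) \<noteq> 0 \<and> T3 c Q Q (lc (1-t) u0 t u) \<noteq> 0" by (elim exE)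
        then show ?thesis using that by blast
      qed
      define w where "w = lc (1-t) u0 t u"
      have "inW w" unfolding w_def by (rule clos[OF u0(1) uW])
      then have "T3 c P w w ^ 2 * T3 c Q Q w = 0" by (rule conjunct1[OF ident])
      then show False using t unfolding w_def[symmetric] by simp
    qed
    have D2: "T3 c Q u u = T3 c P u u * T3 c Q Q R0 / 2" if uW: "inW u" for u
    proof (rule ccontr)
      assume ne0: "T3 c Q u u \<noteq> T3 c P u u * T3 c Q Q R0 / 2"
      then have ne: "2 * T3 c Q u u - T3 c P u u * T3 c Q Q R0 \<noteq> 0" by (simp add: field_simps)
      obtain t where t: "T3 c P (lc (1-t) u0 t u) (lc (1-t) u0 t u) \<noteq> 0"
          "2 * T3 c Q (lc (1-t) u0 t u) (lc (1-t) u0 t u) - T3 c P (lc (1-t) u0 t u) (lc (1-t) u0 t u) * T3 c Q Q R0 \<noteq> 0"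
      proof -
        from slp_prod[where f="\<lambda>x. T3 c P x x" and g="\<lambda>x. 2 * T3 c Q x x - T3 c P x x * T3 c Q Q R0" and u=u0 and w=u, OF slpq slpg u0(2) ne] obtain t where
          "T3 c P (lc (1-t) u0 t u) (lc (1-t) u0 t u) \<noteq> 0 \<and> 2 * T3 c Q (lc (1-t) u0 t u) (lc (1-t) u0 t u) - T3 c P (lc (1-t) u0 t u) (lc (1-t) u0 t u) * T3 c Q Q R0 \<noteq> 0" by (elim exE)
        then show ?thesis using that by blast
      qed
      define w where "w = lc (1-t) u0 t u"
      have "inW w" unfolding w_def by (rule clos[OF u0(1) uW])
      then have A: "6 * (T3 c P w w)^2 * T3 c Q Q R0 - 12 * T3 c P w w * T3 c Q w w = 0" using ident[OF \<open>inW w\<close>] by (elim conjE)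
      have B: "6 * (T3 c P w w * (2 * T3 c Q w w - T3 c P w w * T3 c Q Q R0)) = - (6 * (T3 c P w w)^2 * T3 c Q Q R0 - 12 * T3 c P w w * T3 c Q w w)"
        by (simp add: algebra_simps power2_eq_square)
      from B have "6 * (T3 c P w w * (2 * T3 c Q w w - T3 c P w w * T3 c Q Q R0)) = - 0" unfolding A .
      then have "T3 c P w w * (2 * T3 c Q w w - T3 c P w w * T3 c Q Q R0) = 0" by simp
      then show False using t unfolding w_def[symmetric] by simp
    qed
    have I3: "T3 c u u u = 3 * T3 c P u u * T3 c Q R0 u" if "inW u" for u using ident[OF that] by simp
    have I4: "T3 c R0 u u = T3 c P u u * T3 c Q R0 R0 / 2" if "inW u" for u using ident[OF that] by simp
    have I5: "T3 c R0 R0 u = 0" if "inW u" for u using ident[OF that] by simp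
    have I6: "T3 c R0 R0 R0 = 0" using ident[OF u0(1)] by simp
    define \<beta>0 where "\<beta>0 = T3 c Q Q R0"
    define \<gamma>0 where "\<gamma>0 = T3 c Q R0 R0"
    define mu where "mu = (\<lambda>i. 3 * T3 c Q R0 (ev i) - 3/2 * \<beta>0 * T3 c P R0 (ev i) - 3/2 * \<gamma>0 * T3 c P Q (ev i))"
    have dmu: "dotp mu x = 3 * T3 c Q R0 x - 3/2 * \<beta>0 * T3 c P R0 x - 3/2 * \<gamma>0 * T3 c P Q x" for x
      unfolding mu_def T3_dotp[of c Q R0 x] T3_dotp[of c P R0 x] T3_dotp[of c P Q x] dotp_def
      by (simp add: sum_subtractf sum_distrib_left sum.distrib algebra_simps)
    have M: "cform c x = 0" if x1: "dotp gP x = 0" and x2: "dotp mu x = 0" for x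
    proof -
      define y where "y = T3 c P R0 x"
      define z where "z = T3 c P Q x"
      define u where "u = lc 1 (lc 1 x (- y) Q) (- z) R0"
      have xP: "T3 c P P x = 0" using x1 HP by simp
      have uW: "inW u" unfolding inW_def u_def y_def z_def using xP PPQ R0a PQQ R0b R0c
        by (simp add: T3_lin T3_sym)
      have xd: "x = lc y Q 1 (lc z R0 1 u)" unfolding u_def lc_def by (simp add: fun_eq_iff)
      define W where "W = lc z R0 1 u"
      define q0 where "q0 = T3 c P u u"
      define \<tau> where "\<tau> = T3 c Q R0 u"
      have uf: "T3 c P P u = 0" "T3 c P Q u = 0" "T3 c P u R0 = 0" using uW unfolding inW_def by auto
      have e1: "T3 c Q Q W = z * \<beta>0" unfolding W_def \<beta>0_def T3_lin3 D1[OF uW] by simp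
      have e2: "T3 c Q W W = z^2 * \<gamma>0 + 2 * z * \<tau> + q0 * \<beta>0 / 2"
      proof -
        have "T3 c Q W W = z * (z * T3 c Q R0 R0 + T3 c Q R0 u) + (z * T3 c Q R0 u + T3 c Q u u)"
          unfolding W_def T3_lin2 T3_lin3 by (simp add: T3_sym23[of c Q u R0])
        then show ?thesis unfolding D2[OF uW] \<gamma>0_def \<tau>_def q0_def \<beta>0_def by (simp add: algebra_simps power2_eq_square)
      qed
      have e3: "cform c W = 3 * z * (q0 * \<gamma>0 / 2) + 3 * q0 * \<tau>"
      proof -
        have "cform c W = z^3 * T3 c R0 R0 R0 + 3 * z^2 * 1 * T3 c R0 R0 u + 3 * z * 1^2 * T3 c R0 u u + 1^3 * T3 c u u u"
          unfolding W_def cform_lc ..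
        then show ?thesis unfolding I6 I5[OF uW] I4[OF uW] I3[OF uW] q0_def \<gamma>0_def \<tau>_def by simp
      qed
      have e4: "dotp mu (lc y Q 1 W) = 3 * \<tau> + 3/2 * (y * \<beta>0 + z * \<gamma>0)"
      proof -
        have a1: "T3 c Q R0 (lc y Q 1 W) = y * \<beta>0 + z * \<gamma>0 + \<tau>"
          unfolding W_def T3_lin3 \<beta>0_def \<gamma>0_def \<tau>_def by (simp add: T3_sym)
        have a2: "T3 c P R0 (lc y Q 1 W) = y"
          unfolding W_def T3_lin3 using R0b R0c uf by (simp add: T3_sym)
        have a3: "T3 c P Q (lc y Q 1 W) = z"
          unfolding W_def T3_lin3 using R0b PQQ uf by (simp add: T3_sym)
        show ?thesis unfolding dmu a1 a2 a3 by (simp add: algebra_simps)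
      qed
      have e: "cform c (lc y Q 1 W) = (q0 + 2 * y * z) * dotp mu (lc y Q 1 W)"
        unfolding cform_lc e1 e2 e3[unfolded cform_T3] e4 using FQ by (simp add: algebra_simps power2_eq_square power3_eq_cube)
      have xd': "x = lc y Q 1 W" using xd unfolding W_def .
      show ?thesis using e x2 xd' by simp
    qed
    have gP: "dotp gP P = 0" using FP HP by (simp add: T3_sym)
    have muP: "dotp mu P = 3" unfolding dmu using R0b R0a PPQ by (simp add: T3_sym)
    show False using no_sing[OF card sm gv1, of mu P] muP gP M by simp
  next
    case False
    then have q0: "T3 c P u u = 0" if "inW u" for u using that by blast
    have I3: "T3 c u u u = 0" if "inW u" for u using ident[OF that] q0[OF that] by simp
    have I4: "T3 c R0 u u = 0" if "inW u" for u using ident[OF that] q0[OF that] by simp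
    have I5: "T3 c R0 R0 u = 0" if "inW u" for u using ident[OF that] by simp
    have W00: "inW (\<lambda>_. 0)" unfolding inW_def by simp
    have I6: "T3 c R0 R0 R0 = 0" using ident[OF W00] by simp
    define mu where "mu = (\<lambda>i. T3 c P R0 (ev i))"
    have dmu: "dotp mu x = T3 c P R0 x" for x unfolding mu_def T3_dotp[of c P R0 x] ..
    have M: "cform c x = 0" if x1: "dotp gP x = 0" and x2: "dotp mu x = 0" for x
    proof -
      define z where "z = T3 c P Q x"
      define u where "u = lc 1 x (- z) R0"
      have xP: "T3 c P P x = 0" using x1 HP by simp
      have xR: "T3 c P R0 x = 0" using x2 dmu by simp
      have uW: "inW u" unfolding inW_def u_def z_def using xP xR R0a R0b R0c
        by (simp add: T3_lin T3_sym)
      have xd: "x = lc z R0 1 u" unfolding u_def lc_def by (simp add: fun_eq_iff)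
      have "cform c (lc z R0 1 u) = 0" unfolding cform_lc using I3[OF uW] I4[OF uW] I5[OF uW] I6
        by (simp add: T3_sym)
      then show ?thesis using xd by simp
    qed
    have gQ: "dotp gP Q = 0" using PPQ HP by simp
    have muQ: "dotp mu Q = 1" unfolding dmu using R0b by (simp add: T3_sym)
    show False using no_sing[OF card sm gv1, of mu Q] muQ gQ M by simp
  qed
qed

lemma slp_phi: "slp (\<lambda>x. phi c P Q x)"
  unfolding phi_def power2_eq_square
  by (intro slp_diff slp_add slp_mult slp_const slp_T3 vlp_const vlp_id)

lemma exists_phi:
  fixes c :: "('n::finite) cubic" and P Q R1 R2 :: "'n \<Rightarrow> rat"
  assumes card: "CARD('n) \<ge> 5" and sm: "smooth_cubic c" and P0: "P \<noteq> (\<lambda>_. 0)"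
    and FP: "T3 c P P P = 0" and FQ: "T3 c Q Q Q = 0" and PPQ: "T3 c P P Q = 0" and PQQ: "T3 c P Q Q = 0"
    and R1: "T3 c P P R1 = 0" "T3 c P R1 R1 \<noteq> 0" and R2: "T3 c P P R2 = 0" "T3 c Q Q R2 \<noteq> 0"
  shows "\<exists>R. T3 c P P R = 0 \<and> phi c P Q R \<noteq> 0"
proof (rule ccontr)
  assume nn: "\<not> ?thesis"
  then have ph0: "phi c P Q R = 0" if "T3 c P P R = 0" for R using that by blast
  have slpq: "slp (\<lambda>x. T3 c P x x)" by (intro slp_T3 vlp_const vlp_id)
  have slpb: "slp (\<lambda>x. T3 c Q Q x)" by (intro slp_T3 vlp_const vlp_id)
  show False
  proof (cases "\<forall>R. T3 c P P R = 0 \<longrightarrow> T3 c P Q R = 0")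
    case True
    from slp_prod[where f="\<lambda>x. T3 c P x x" and g="\<lambda>x. T3 c Q Q x" and u=R1 and w=R2, OF slpq slpb R1(2) R2(2)]
    obtain t where t: "T3 c P (lc (1-t) R1 t R2) (lc (1-t) R1 t R2) \<noteq> 0 \<and> T3 c Q Q (lc (1-t) R1 t R2) \<noteq> 0"
      by (elim exE)
    define R where "R = lc (1-t) R1 t R2"
    have RP: "T3 c P P R = 0" unfolding R_def T3_lin3 R1(1) R2(1) by simp
    have "T3 c P Q R = 0" using True RP by blast
    then have "phi c P Q R = 3 * (T3 c P R R)^2 * T3 c Q Q R" unfolding phi_def by simp
    moreover have "phi c P Q R = 0" using ph0[OF RP] .
    ultimately show False using t unfolding R_def[symmetric] by simp
  next
    case False
    then obtain R1' where R1': "T3 c P P R1' = 0" "T3 c P Q R1' \<noteq> 0" by blast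
    define c1 where "c1 = T3 c P Q R1'"
    define q1 where "q1 = T3 c P R1' R1'"
    have c1: "c1 \<noteq> 0" using R1' c1_def by simp
    define R0 where "R0 = lc (1/c1) R1' (-(q1/(2*c1^2))) Q"
    have R0a: "T3 c P P R0 = 0" unfolding R0_def T3_lin3 R1'(1) PPQ by simp
    have R0b: "T3 c P Q R0 = 1" unfolding R0_def T3_lin3 PQQ using c1 c1_def by simp
    have PR1Q: "T3 c P R1' Q = c1" unfolding c1_def by (simp add: T3_sym)
    have PQR1: "T3 c P Q R1' = c1" unfolding c1_def ..
    have R0c: "T3 c P R0 R0 = 0" unfolding R0_def T3_lin2 T3_lin3 PQQ PR1Q PQR1 q1_def[symmetric]
      using c1 by (simp add: field_simps power2_eq_square)
    show False by (rule degenerate[OF card sm P0 FP FQ PPQ PQQ R0a R0b R0c ph0])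
  qed
qed

theorem lemma5p4:
  fixes c :: "('n::finite) cubic" and n :: nat and P Q :: "'n \<Rightarrow> rat"
  assumes "CARD('n) = n + 2" and "n \<ge> 3"
    and "smooth_cubic c"
    and "on_X c P" and "\<not> eckardt c P"
    and "on_X c Q" and "in_tangent c P Q"
    and "tangent_hyperplane c Q \<noteq> tangent_hyperplane c P"
  shows "Q \<in> qspan c P"
proof -
  have card: "CARD('n) \<ge> 5" using assms(1,2) by simp
  note sm = assms(3)
  have P0: "P \<noteq> (\<lambda>_. 0)" and FP: "T3 c P P P = 0" using assms(4) unfolding on_X_def cform_T3 by auto
  have Q0: "Q \<noteq> (\<lambda>_. 0)" and FQ: "T3 c Q Q Q = 0" using assms(6) unfolding on_X_def cform_T3 by auto
  have PPQ: "T3 c P P Q = 0" using assms(7) unfolding in_tangent_iff by (simp add: T3_sym)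
  show ?thesis
  proof (cases "T3 c P Q Q = 0")
    case False
    show ?thesis by (rule span_tangent[OF base_self P0 FP FQ PPQ False])
  next
    case True
    note PQQ = True
    obtain R1 where R1: "T3 c P P R1 = 0" "T3 c P R1 R1 \<noteq> 0" using exists_q[OF sm P0 FP assms(5)] by blast
    obtain R2 where R2: "T3 c P P R2 = 0" "T3 c Q Q R2 \<noteq> 0" using exists_b[OF sm P0 Q0 assms(8)] by blast
    obtain R3 where R3: "T3 c P P R3 = 0" "phi c P Q R3 \<noteq> 0"
      using exists_phi[OF card sm P0 FP FQ PPQ PQQ R1 R2] by blast
    have slpq: "slp (\<lambda>x. T3 c P x x)" by (intro slp_T3 vlp_const vlp_id)
    have slpb: "slp (\<lambda>x. T3 c Q Q x)" by (intro slp_T3 vlp_const vlp_id)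
    have slpqb: "slp (\<lambda>x. T3 c P x x * T3 c Q Q x)" by (intro slp_mult slp_T3 vlp_const vlp_id)
    from slp_prod[where f="\<lambda>x. T3 c P x x" and g="\<lambda>x. T3 c Q Q x" and u=R1 and w=R2, OF slpq slpb R1(2) R2(2)]
    obtain t where t: "T3 c P (lc (1-t) R1 t R2) (lc (1-t) R1 t R2) \<noteq> 0 \<and> T3 c Q Q (lc (1-t) R1 t R2) \<noteq> 0"
      by (elim exE)
    define R12 where "R12 = lc (1-t) R1 t R2"
    have R12: "T3 c P P R12 = 0" "T3 c P R12 R12 * T3 c Q Q R12 \<noteq> 0"
      using t unfolding R12_def[symmetric] unfolding R12_def T3_lin3 R1(1) R2(1) by simp_all
    from slp_prod[where f="\<lambda>x. T3 c P x x * T3 c Q Q x" and g="\<lambda>x. phi c P Q x" and u=R12 and w=R3,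
        OF slpqb slp_phi R12(2) R3(2)]
    obtain t' where t': "T3 c P (lc (1-t') R12 t' R3) (lc (1-t') R12 t' R3) * T3 c Q Q (lc (1-t') R12 t' R3) \<noteq> 0
        \<and> phi c P Q (lc (1-t') R12 t' R3) \<noteq> 0"
      by (elim exE)
    define R where "R = lc (1-t') R12 t' R3"
    have RP: "T3 c P P R = 0" unfolding R_def T3_lin3 R12(1) R3(1) by simp
    have Rq: "T3 c P R R \<noteq> 0" and Rb: "T3 c Q Q R \<noteq> 0" and Rphi: "phi c P Q R \<noteq> 0"
      using t' unfolding R_def[symmetric] by auto
    show ?thesis by (rule final_step[OF P0 Q0 FP FQ PPQ PQQ RP Rq Rb Rphi[unfolded phi_def]])
  qed
qed


end
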